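(* Let $p>5$ be a prime with $p\equiv \pm1\pmod 5$. Let $f(x)=x^5-5x^3+5x+2-4t\in\mathbb F_p[t][x]$, write $f(x)^{(p-1)/2}=\sum_r c_r x^r$ with $c_r\in\mathbb F_p[t]$, and let $a(t)=c_{p-1}$, $b(t)=c_{2p-2}$ be the diagonal entries of $N=\begin{pmatrix}c_{p-1}&c_{p-2}\\c_{2p-1}&c_{2p-2}\end{pmatrix}$ (the $p$-th power of the Cartier–Manin matrix of $C^-:y^2=f(x)$ with respect to the basis $dx/y,\ x\,dx/y$, which is diagonal for such $p$). Then, as polynomials in $t$ over $\mathbb F_p$, $$\deg a(t)=\begin{cases}\tfrac32 k,& p=5k+1,\\ \tfrac32 k-1,& p=5k-1,\end{cases}\qquad \deg b(t)=\begin{cases}\tfrac12 k,& p=5k+1,\\ \tfrac12 k-1,& p=5k-1.\end{cases}$$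
   Context: For a hyperelliptic curve $y^2=f(x)$ of genus $g$ over a field of characteristic $p>2$, the Cartier–Manin matrix with respect to the basis $x^{j-1}dx/y$ ($j=1,\dots,g$) of $H^0(C,\Omega^1_C)$ is $N^{(1/p)}$, where $N=(c_{ip-j})_{i,j}$ and $f(x)^{(p-1)/2}=\sum c_r x^r$. *)

theory Defs
  imports "Berlekamp_Zassenhaus.Finite_Field" "HOL-Computational_Algebra.Polynomial"
begin

definition fpoly :: "'p::prime_card mod_ring poly poly" where
  "fpoly = [: [: 2, -4 :], 5, 0, -5, 0, 1 :]"

definition cm_coeff :: "nat \<Rightarrow> 'p::prime_card mod_ring poly" where
  "cm_coeff r = coeff (fpoly ^ ((CARD('p) - 1) div 2)) r"

end

theory Submission imports Defs begin

lemma mp_power: "map_poly (\<lambda>a::'a::comm_semiring_1. [:a:]) (p^n) = (map_poly (\<lambda>a. [:a:]) p)^n"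
proof -
  interpret h: map_poly_comm_semiring_hom "\<lambda>a::'a. [:a:]" by unfold_locales (auto simp: mult.commute)
  show ?thesis by (rule h.hom_power)
qed

definition gp :: "'a::comm_ring_1 poly" where "gp = [:2,5,0,-5,0,1:]"

lemma fpoly_split: "fpoly = map_poly (\<lambda>a. [:a:]) gp + [:[:0,-4:]:]"
  by (simp add: fpoly_def gp_def map_poly_pCons numeral_poly)

lemma c_monom: "[:0,a:] = monom a 1"
  by (intro poly_eqI) (auto simp: coeff_pCons coeff_monom split: nat.split)

lemma const_mult: "[:a:] * q = smult a q"
  by simp

lemma coeff_fpow: "coeff (fpoly^n) r =
   (\<Sum>k\<le>n. monom (of_nat (n choose k) * (-4)^k * coeff (gp^(n-k)) r) k)"
proof -
  have "fpoly^n = ([:[:0,-4:]:] + map_poly (\<lambda>a. [:a:]) gp)^n"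
    by (simp add: fpoly_split add.commute)
  also have "\<dots> = (\<Sum>k\<le>n. of_nat (n choose k) * [:[:0,-4:]:]^k * (map_poly (\<lambda>a. [:a:]) gp)^(n-k))"
    by (rule binomial_ring)
  finally have e: "fpoly^n = \<dots>" .
  have t: "coeff (of_nat (n choose k) * [:[:0,-4:]:]^k * (map_poly (\<lambda>a. [:a:]) (gp::'a mod_ring poly))^(n-k)) r
     = monom (of_nat (n choose k) * (-4)^k * coeff (gp^(n-k)) r) k" for k
  proof -
    have "of_nat (n choose k) * [:[:0,-4:]:]^k = [: of_nat (n choose k) * [:0,-4::'a mod_ring:]^k :]"
      by (simp add: poly_const_pow of_nat_poly)
    then show ?thesis
      apply (simp only:)
      apply (simp add: mp_power[symmetric] coeff_map_poly c_monom monom_power mult_monom smult_monom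
           const_mult)
      by (simp add: of_nat_poly const_mult smult_monom mult_ac)
  qed
  show ?thesis unfolding e coeff_sum t ..
qed

lemma coeff_cm: "coeff (cm_coeff r :: 'p::prime_card mod_ring poly) i =
  (if i \<le> (CARD('p)-1) div 2 then of_nat (((CARD('p)-1) div 2) choose i) * (-4)^i
     * coeff (gp^((CARD('p)-1) div 2 - i)) r else 0)"
  unfolding cm_coeff_def coeff_fpow coeff_sum by (simp add: coeff_monom)

lemma degI: assumes "coeff q J \<noteq> 0" "\<forall>i>J. coeff q i = 0" shows "degree q = J"
  using assms by (meson le_antisym le_degree degree_le)

lemma degree_gp: "degree (gp :: 'a::{comm_ring_1,nontriv} poly) = 5"
  by (simp add: gp_def)

lemma of_nat_mod_ring_nz: assumes "\<not> CARD('p) dvd x" shows "(of_nat x :: 'p::prime_card mod_ring) \<noteq> 0"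
  using assms of_nat_0_mod_ring_dvd by blast

lemma choose_nz: assumes "n < CARD('p::prime_card)" "k \<le> n"
  shows "(of_nat (n choose k) :: 'p mod_ring) \<noteq> 0"
proof (rule of_nat_mod_ring_nz, rule notI)
  assume "CARD('p) dvd (n choose k)"
  then have "CARD('p) dvd fact n" using binomial_fact_lemma[OF assms(2)]
    by (metis dvd_mult)
  then have "CARD('p) \<le> n" using prime_dvd_fact_iff prime_card by blast
  then show False using assms by simp
qed

lemma deg_cm:
  fixes r J m :: nat
  assumes p5: "CARD('p::prime_card) > 5" and J: "J \<le> (CARD('p)-1) div 2"
    and m: "m = (CARD('p)-1) div 2 - J" and r: "5 * (m - 1) < r"
    and v: "coeff (gp^m :: 'p mod_ring poly) r \<noteq> 0"
  shows "degree (cm_coeff r :: 'p mod_ring poly) = J"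
proof (rule degI)
  let ?n = "(CARD('p)-1) div 2"
  have n: "?n < CARD('p)" using p5 by simp
  have 4: "(-4 :: 'p mod_ring) \<noteq> 0"
  proof -
    have "(of_nat 4 :: 'p mod_ring) \<noteq> 0"
      by (rule of_nat_mod_ring_nz) (use p5 in \<open>auto dest: dvd_imp_le\<close>)
    then show ?thesis by simp
  qed
  show "coeff (cm_coeff r :: 'p mod_ring poly) J \<noteq> 0"
    unfolding coeff_cm using J choose_nz[OF n J] 4 v m by simp
  show "\<forall>i>J. coeff (cm_coeff r :: 'p mod_ring poly) i = 0"
  proof (intro allI impI)
    fix i assume i: "i > J"
    show "coeff (cm_coeff r :: 'p mod_ring poly) i = 0"
    proof (cases "i \<le> ?n")
      case True
      have "degree (gp^(?n - i) :: 'p mod_ring poly) = (?n - i) * 5"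
        by (simp add: degree_power_eq degree_gp gp_def)
      also have "\<dots> < r" using r m i True by (simp add: algebra_simps) linarith
      finally have "coeff (gp^(?n - i) :: 'p mod_ring poly) r = 0" by (simp add: coeff_eq_0)
      then show ?thesis unfolding coeff_cm by simp
    qed (simp add: coeff_cm)
  qed
qed

lemma coeff_hpow:
  fixes h :: "'a::comm_ring_1 poly"
  assumes "coeff h 0 = 1" "coeff h 1 = 0" "coeff h 3 = 0"
  shows "coeff (h^m) 0 = 1 \<and> coeff (h^m) 1 = 0 \<and> coeff (h^m) 2 = of_nat m * coeff h 2
     \<and> coeff (h^m) 3 = 0 \<and> coeff (h^m) 4 = of_nat m * coeff h 4 + of_nat (m choose 2) * coeff h 2 ^ 2"
proof (induction m)
  case 0
  then show ?case by (simp add: numeral_2_eq_2)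
next
  case (Suc m)
  have e: "Suc m choose 2 = (m choose 2) + m"
    by (simp add: numeral_2_eq_2)
  show ?case using Suc assms
    by (simp add: coeff_mult numeral_3_eq_3 numeral_2_eq_2 eval_nat_numeral e algebra_simps power2_eq_square)
qed

lemma coeff_gp_rev:
  assumes "i \<le> 5 * m"
  shows "coeff (gp^m :: 'p::prime_card mod_ring poly) (5*m - i) = coeff (reflect_poly gp ^ m) i"
proof -
  have d: "degree (gp^m :: 'p mod_ring poly) = 5 * m"
    by (simp add: degree_power_eq degree_gp gp_def)
  show ?thesis using assms
    by (simp add: reflect_poly_power[symmetric] coeff_reflect_poly d)
qed

lemma coeffs_rgp:
  "coeff (reflect_poly (gp :: 'p::prime_card mod_ring poly)) 0 = 1"
  "coeff (reflect_poly (gp :: 'p::prime_card mod_ring poly)) 1 = 0"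
  "coeff (reflect_poly (gp :: 'p::prime_card mod_ring poly)) 2 = -5"
  "coeff (reflect_poly (gp :: 'p::prime_card mod_ring poly)) 3 = 0"
  "coeff (reflect_poly (gp :: 'p::prime_card mod_ring poly)) 4 = 5"
  by (simp_all add: coeff_reflect_poly degree_gp) (simp_all add: gp_def)

lemma coeff_gp_top: "coeff (gp^m :: 'p::prime_card mod_ring poly) (5*m) = 1"
  using coeff_gp_rev[of 0 m, where 'p='p] coeff_hpow[OF coeffs_rgp(1,2,4)[where 'p='p], of m] by simp

lemma coeff_gp_2: assumes "m \<ge> 1"
  shows "coeff (gp^m :: 'p::prime_card mod_ring poly) (5*m - 2) = - 5 * of_nat m"
  using coeff_gp_rev[of 2 m, where 'p='p] coeff_hpow[OF coeffs_rgp(1,2,4)[where 'p='p], of m] assms coeffs_rgp(3)[where 'p='p] by simp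

lemma coeff_gp_4: assumes "m \<ge> 1"
  shows "coeff (gp^m :: 'p::prime_card mod_ring poly) (5*m - 4) = of_nat m * 5 + of_nat (m choose 2) * 25"
  using coeff_gp_rev[of 4 m, where 'p='p] coeff_hpow[OF coeffs_rgp(1,2,4)[where 'p='p], of m] assms coeffs_rgp(3,5)[where 'p='p] by simp

theorem lemma4p5:
  assumes "CARD('p::prime_card) > 5"
    and "CARD('p) mod 5 = 1 \<or> CARD('p) mod 5 = 4"
  shows "(\<forall>k. CARD('p) = 5 * k + 1 \<longrightarrow>
            degree (cm_coeff (CARD('p) - 1) :: 'p mod_ring poly) = 3 * k div 2
          \<and> degree (cm_coeff (2 * CARD('p) - 2) :: 'p mod_ring poly) = k div 2)
       \<and> (\<forall>k. CARD('p) = 5 * k - 1 \<longrightarrow>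
            degree (cm_coeff (CARD('p) - 1) :: 'p mod_ring poly) = 3 * k div 2 - 1
          \<and> degree (cm_coeff (2 * CARD('p) - 2) :: 'p mod_ring poly) = k div 2 - 1)"
proof -
  have odd: "odd (CARD('p))"
    using prime_odd_nat[OF prime_card[where 'a='p]] assms(1) by simp
  show ?thesis
  proof (intro conjI allI impI)
    fix k assume pk: "CARD('p) = 5 * k + 1"
    have "\<exists>j. k = 2 * j" using odd pk by presburger
    then obtain j where j: "k = 2 * j" by blast
    have j1: "j \<ge> 1" using pk j assms(1) by simp
    have n: "(CARD('p) - 1) div 2 = 5 * j" using pk j by simp
    have r1: "CARD('p) - 1 = 5 * (2 * j)" using pk j by simp
    have r2: "2 * CARD('p) - 2 = 5 * (4 * j)" using pk j by simp
    have "degree (cm_coeff (CARD('p) - 1) :: 'p mod_ring poly) = 3 * j"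
      by (rule deg_cm[OF assms(1), of "3*j" "2*j"]) (use n r1 j1 coeff_gp_top[of "2*j", where 'p='p] in auto)
    then show "degree (cm_coeff (CARD('p) - 1) :: 'p mod_ring poly) = 3 * k div 2"
      using j by simp
    have "degree (cm_coeff (2 * CARD('p) - 2) :: 'p mod_ring poly) = j"
      by (rule deg_cm[OF assms(1), of "j" "4*j"]) (use n r2 j1 coeff_gp_top[of "4*j", where 'p='p] in auto)
    then show "degree (cm_coeff (2 * CARD('p) - 2) :: 'p mod_ring poly) = k div 2"
      using j by simp
  next
    fix k assume pk: "CARD('p) = 5 * k - 1"
    have "\<exists>j. k = 2 * j" using odd pk assms(1) by presburger
    then obtain j where j: "k = 2 * j" by blast
    have j1: "j \<ge> 1" using pk j assms(1) by simp
    have p10: "CARD('p) + 1 = 10 * j" using pk j assms(1) by simp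
    have n: "(CARD('p) - 1) div 2 = 5 * j - 1" using p10 by simp
    have r1: "CARD('p) - 1 = 5 * (2 * j) - 2" using p10 by simp
    have r2: "2 * CARD('p) - 2 = 5 * (4 * j) - 4" using p10 by simp
    have x: "(of_nat j :: 'p mod_ring) * 10 = 1"
    proof -
      have "(of_nat (CARD('p) + 1) :: 'p mod_ring) = 1" by simp
      then show ?thesis unfolding p10 by (simp add: mult.commute)
    qed
    have v1: "coeff (gp^(2*j) :: 'p mod_ring poly) (CARD('p) - 1) = -1"
    proof -
      have "coeff (gp^(2*j) :: 'p mod_ring poly) (CARD('p) - 1) = - 5 * of_nat (2*j)"
        unfolding r1 by (rule coeff_gp_2) (use j1 in simp)
      also have "\<dots> = - (of_nat j * 10)" by simp
      finally show ?thesis using x by simp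
    qed
    have "degree (cm_coeff (CARD('p) - 1) :: 'p mod_ring poly) = 3 * j - 1"
      by (rule deg_cm[OF assms(1), of "3*j - 1" "2*j"]) (use n r1 j1 v1 in auto)
    then show "degree (cm_coeff (CARD('p) - 1) :: 'p mod_ring poly) = 3 * k div 2 - 1"
      using j by simp
    have ch: "4 * j choose 2 = 2 * j * (4 * j - 1)"
        by (simp add: choose_two)
    have v2: "coeff (gp^(4*j) :: 'p mod_ring poly) (2 * CARD('p) - 2) = -1"
    proof -
      have "coeff (gp^(4*j) :: 'p mod_ring poly) (2 * CARD('p) - 2)
           = of_nat (4*j) * 5 + of_nat (4*j choose 2) * 25"
        unfolding r2 by (rule coeff_gp_4) (use j1 in simp)
      also have "\<dots> = of_nat j * 20 + 50 * of_nat j * (4 * of_nat j - 1)"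
      proof -
        have hh: "(of_nat (2 * j * (4 * j - 1)) :: 'p mod_ring) = 2 * of_nat j * (4 * of_nat j - 1)"
          using j1 by (simp only: of_nat_mult of_nat_diff) simp
        show ?thesis by (simp only: ch hh) (simp add: algebra_simps)
      qed
      also have "\<dots> = 2 * (of_nat j * 10)^2 - 3 * (of_nat j * 10)"
        by (simp add: algebra_simps power2_eq_square)
      finally show ?thesis using x by simp
    qed
    have "degree (cm_coeff (2 * CARD('p) - 2) :: 'p mod_ring poly) = j - 1"
      by (rule deg_cm[OF assms(1), of "j - 1" "4*j"]) (use n r2 j1 v2 in auto)
    then show "degree (cm_coeff (2 * CARD('p) - 2) :: 'p mod_ring poly) = k div 2 - 1"
      using j by simp
  qed
qed
end
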